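(* For every $n\ge 0$ there is a UFA with $n$ states such that both its forward determinization and its backward determinization have at least $\frac12\sqrt{n+1}\cdot 2^{n/2}$ states.
   Context: A UFA is an NFA $(Q,\Sigma,\delta,I,F)$ (finite states $Q$, finite alphabet $\Sigma$, transitions $\delta\subseteq Q\times\Sigma\times Q$, initial states $I$, accepting states $F$) in which every word has at most one accepting run (run from a state of $I$ to a state of $F$). For $S\subseteq Q$, $w\in\Sigma^*$: $\delta(S,w)=\{r\mid\exists q\in S.\ q\xrightarrow{w}r\}$, $\delta^{-1}(w,S)=\{r\mid \exists q\in S.\ r\xrightarrow{w} q\}$. The forward determinization has state set $\{\delta(I,w)\mid w\in\Sigma^*\}$; the backward determinization has state set $\{\delta^{-1}(w,F)\mid w\in\Sigma^*\}$. *)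

theory Defs
  imports Complex_Main
begin

definition runs :: "('q \<times> 'a \<times> 'q) set \<Rightarrow> 'a list \<Rightarrow> 'q list set" where
  "runs d w = {qs. length qs = Suc (length w) \<and>
                   (\<forall>i < length w. (qs ! i, w ! i, qs ! Suc i) \<in> d)}"

definition is_nfa :: "'q set \<Rightarrow> 'a set \<Rightarrow> ('q \<times> 'a \<times> 'q) set \<Rightarrow> 'q set \<Rightarrow> 'q set \<Rightarrow> bool" where
  "is_nfa Q Sig d I F \<longleftrightarrow> finite Q \<and> finite Sig \<and> d \<subseteq> Q \<times> Sig \<times> Q \<and> I \<subseteq> Q \<and> F \<subseteq> Q"

definition accepting_runs :: "('q \<times> 'a \<times> 'q) set \<Rightarrow> 'q set \<Rightarrow> 'q set \<Rightarrow> 'a list \<Rightarrow> 'q list set" where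
  "accepting_runs d I F w = {qs \<in> runs d w. hd qs \<in> I \<and> last qs \<in> F}"

definition is_ufa :: "'q set \<Rightarrow> 'a set \<Rightarrow> ('q \<times> 'a \<times> 'q) set \<Rightarrow> 'q set \<Rightarrow> 'q set \<Rightarrow> bool" where
  "is_ufa Q Sig d I F \<longleftrightarrow> is_nfa Q Sig d I F \<and>
     (\<forall>w \<in> lists Sig. \<forall>r1 \<in> accepting_runs d I F w. \<forall>r2 \<in> accepting_runs d I F w. r1 = r2)"

definition delta_fwd :: "('q \<times> 'a \<times> 'q) set \<Rightarrow> 'q set \<Rightarrow> 'a list \<Rightarrow> 'q set" where
  "delta_fwd d S w = {r. \<exists>qs \<in> runs d w. hd qs \<in> S \<and> last qs = r}"

definition delta_bwd :: "('q \<times> 'a \<times> 'q) set \<Rightarrow> 'a list \<Rightarrow> 'q set \<Rightarrow> 'q set" where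
  "delta_bwd d w S = {r. \<exists>qs \<in> runs d w. hd qs = r \<and> last qs \<in> S}"

definition fwd_det_states :: "'a set \<Rightarrow> ('q \<times> 'a \<times> 'q) set \<Rightarrow> 'q set \<Rightarrow> 'q set set" where
  "fwd_det_states Sig d I = {delta_fwd d I w | w. w \<in> lists Sig}"

definition bwd_det_states :: "'a set \<Rightarrow> ('q \<times> 'a \<times> 'q) set \<Rightarrow> 'q set \<Rightarrow> 'q set set" where
  "bwd_det_states Sig d F = {delta_bwd d w F | w. w \<in> lists Sig}"

end

theory Submission
  imports Defs
begin

lemma runs_Nil: "runs d [] = {[q] | q. True}"
  unfolding runs_def by (auto simp: length_Suc_conv)

lemma runs_Cons: "runs d (c#w) = {q # qs | q qs. qs \<in> runs d w \<and> (q, c, hd qs) \<in> d}"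
proof (intro set_eqI iffI)
  fix x assume "x \<in> runs d (c#w)"
  then have L: "length x = Suc (Suc (length w))" and T: "\<forall>i < Suc (length w). (x ! i, (c#w) ! i, x ! Suc i) \<in> d"
    unfolding runs_def by auto
  then obtain q qs where x: "x = q # qs" by (cases x) auto
  have "qs \<in> runs d w" unfolding runs_def using L T x by auto
  moreover have "(q, c, hd qs) \<in> d" using T x L by (cases qs) (auto elim: allE[of _ 0])
  ultimately show "x \<in> {q # qs | q qs. qs \<in> runs d w \<and> (q, c, hd qs) \<in> d}" using x by auto
next
  fix x assume "x \<in> {q # qs | q qs. qs \<in> runs d w \<and> (q, c, hd qs) \<in> d}"
  then obtain q qs where x: "x = q # qs" and r: "qs \<in> runs d w" and t: "(q, c, hd qs) \<in> d" by auto
  from r have L: "length qs = Suc (length w)" and T: "\<forall>i < length w. (qs ! i, w ! i, qs ! Suc i) \<in> d"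
    unfolding runs_def by auto
  have "\<forall>i < Suc (length w). (x ! i, (c#w) ! i, x ! Suc i) \<in> d"
  proof (intro allI impI)
    fix i assume "i < Suc (length w)"
    then show "(x ! i, (c#w) ! i, x ! Suc i) \<in> d"
      using T t L x by (cases i; cases qs) auto
  qed
  then show "x \<in> runs d (c#w)" unfolding runs_def using L x by auto
qed

lemma runs_nonempty: "qs \<in> runs d w \<Longrightarrow> qs \<noteq> []"
  unfolding runs_def by auto

lemma delta_fwd_Nil: "delta_fwd d S [] = S"
  unfolding delta_fwd_def runs_Nil by auto

lemma delta_fwd_Cons: "delta_fwd d S (c#w) = delta_fwd d {r. \<exists>q\<in>S. (q,c,r)\<in>d} w"
proof -
  have l: "qs \<in> runs d w \<Longrightarrow> last (q # qs) = last qs" for q qs by (simp add: runs_nonempty)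
  show ?thesis unfolding delta_fwd_def runs_Cons
  proof (intro set_eqI iffI)
    fix r assume "r \<in> {r. \<exists>qs\<in>{q # qs |q qs. qs \<in> runs d w \<and> (q, c, hd qs) \<in> d}. hd qs \<in> S \<and> last qs = r}"
    then obtain q qs where "qs \<in> runs d w" "(q, c, hd qs) \<in> d" "q \<in> S" "last (q#qs) = r" by auto
    then show "r \<in> {r. \<exists>qs\<in>runs d w. hd qs \<in> {r. \<exists>q\<in>S. (q, c, r) \<in> d} \<and> last qs = r}"
      using l by auto
  next
    fix r assume "r \<in> {r. \<exists>qs\<in>runs d w. hd qs \<in> {r. \<exists>q\<in>S. (q, c, r) \<in> d} \<and> last qs = r}"
    then obtain q qs where "qs \<in> runs d w" "(q, c, hd qs) \<in> d" "q \<in> S" "last qs = r" by auto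
    then show "r \<in> {r. \<exists>qs\<in>{q # qs |q qs. qs \<in> runs d w \<and> (q, c, hd qs) \<in> d}. hd qs \<in> S \<and> last qs = r}"
      using l by force
  qed
qed

lemma delta_bwd_Nil: "delta_bwd d [] S = S"
  unfolding delta_bwd_def runs_Nil by auto

lemma delta_bwd_Cons: "delta_bwd d (c#w) S = {r. \<exists>q \<in> delta_bwd d w S. (r,c,q)\<in>d}"
proof -
  have l: "qs \<in> runs d w \<Longrightarrow> last (q # qs) = last qs" for q qs by (simp add: runs_nonempty)
  show ?thesis unfolding delta_bwd_def runs_Cons
  proof (intro set_eqI iffI)
    fix r assume "r \<in> {r. \<exists>qs\<in>{q # qs |q qs. qs \<in> runs d w \<and> (q, c, hd qs) \<in> d}. hd qs = r \<and> last qs \<in> S}"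
    then obtain q qs where "qs \<in> runs d w" "(q, c, hd qs) \<in> d" "q = r" "last (q#qs) \<in> S" by (simp only: mem_Collect_eq) fastforce
    then show "r \<in> {r. \<exists>q\<in>{r. \<exists>qs\<in>runs d w. hd qs = r \<and> last qs \<in> S}. (r, c, q) \<in> d}"
      using l by auto
  next
    fix r assume "r \<in> {r. \<exists>q\<in>{r. \<exists>qs\<in>runs d w. hd qs = r \<and> last qs \<in> S}. (r, c, q) \<in> d}"
    then obtain qs where "qs \<in> runs d w" "(r, c, hd qs) \<in> d" "last qs \<in> S" by auto
    then show "r \<in> {r. \<exists>qs\<in>{q # qs |q qs. qs \<in> runs d w \<and> (q, c, hd qs) \<in> d}. hd qs = r \<and> last qs \<in> S}"
      using l by force
  qed
qed

lemma delta_bwd_append: "delta_bwd d (u @ v) S = delta_bwd d u (delta_bwd d v S)"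
  by (induction u) (auto simp: delta_bwd_Cons delta_bwd_Nil)

lemma delta_fwd_sub: "d \<subseteq> Q \<times> UNIV \<times> Q \<Longrightarrow> S \<subseteq> Q \<Longrightarrow> delta_fwd d S w \<subseteq> Q"
proof (induction w arbitrary: S)
  case Nil then show ?case by (simp add: delta_fwd_Nil)
next
  case (Cons c w)
  have "{r. \<exists>q\<in>S. (q,c,r)\<in>d} \<subseteq> Q" using Cons.prems by blast
  then show ?case using Cons by (simp add: delta_fwd_Cons)
qed

lemma delta_bwd_sub: "d \<subseteq> Q \<times> UNIV \<times> Q \<Longrightarrow> S \<subseteq> Q \<Longrightarrow> delta_bwd d w S \<subseteq> Q"
  by (induction w) (auto simp: delta_bwd_Cons delta_bwd_Nil)

lemma det_runs:
  assumes det: "\<And>p c q q'. (p,c,q)\<in>d \<Longrightarrow> (p,c,q')\<in>d \<Longrightarrow> q = q'"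
  shows "qs1 \<in> runs d w \<Longrightarrow> qs2 \<in> runs d w \<Longrightarrow> hd qs1 = hd qs2 \<Longrightarrow> qs1 = qs2"
proof (induction w arbitrary: qs1 qs2)
  case Nil then show ?case by (auto simp: runs_Nil)
next
  case (Cons c w)
  then obtain q1 r1 q2 r2 where "qs1 = q1 # r1" "qs2 = q2 # r2" "r1 \<in> runs d w" "r2 \<in> runs d w"
    "(q1, c, hd r1) \<in> d" "(q2, c, hd r2) \<in> d" by (auto simp: runs_Cons)
  with Cons show ?case using det by auto
qed

lemma bound_lemma:
  fixes n k :: nat
  assumes "(n+1)*2^n \<le> 4*k^2"
  shows "1/2 * sqrt (real n + 1) * 2 powr (real n / 2) \<le> real k"
proof -
  have p: "2 powr (real n / 2) = sqrt (2^n)"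
    by (simp add: powr_half_sqrt[symmetric] powr_realpow[symmetric] powr_powr)
  have "sqrt (real n + 1) * 2 powr (real n / 2) = sqrt ((real n + 1) * 2^n)"
    by (simp add: p real_sqrt_mult)
  also have "\<dots> \<le> sqrt (4 * (real k)^2)"
  proof -
    have "real ((n+1)*2^n) \<le> real (4*k^2)" using assms by linarith
    then have "(real n + 1) * 2^n \<le> 4 * (real k)^2" by (simp add: algebra_simps)
    then show ?thesis by simp
  qed
  also have "\<dots> = 2 * real k" by (simp add: real_sqrt_mult)
  finally show ?thesis by simp
qed


definition dA :: "nat \<Rightarrow> nat \<Rightarrow> (nat \<times> nat \<times> nat) set" where
  "dA n a = {(q, j, q) | q j. q < n \<and> j < n \<and> q \<noteq> j} \<union> {(x, n+x, a) | x. x < a}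
     \<union> {(y, n+x, y) | x y. x < a \<and> a \<le> y \<and> y < n}"

lemma dA_det: "(p,c,q) \<in> dA n a \<Longrightarrow> (p,c,q') \<in> dA n a \<Longrightarrow> q = q'"
  unfolding dA_def by auto

lemma dA_sub: "a < n \<Longrightarrow> dA n a \<subseteq> {0..<n} \<times> {0..<n+a} \<times> {0..<n}"
  unfolding dA_def by auto

lemma pre_rem: "j < n \<Longrightarrow> B \<subseteq> {0..<n} \<Longrightarrow> {r. \<exists>q\<in>B. (r, j, q) \<in> dA n a} = B - {j}"
  unfolding dA_def by auto

lemma img_rem: "j < n \<Longrightarrow> S \<subseteq> {0..<n} \<Longrightarrow> {r. \<exists>q\<in>S. (q, j, r) \<in> dA n a} = S - {j}"
  unfolding dA_def by auto

lemma pre_h: "x < a \<Longrightarrow> a < n \<Longrightarrow> {r. \<exists>q\<in>{a..<n}. (r, n+x, q) \<in> dA n a} = insert x {a..<n}"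
  unfolding dA_def by auto

lemma fwd_rems: "set xs \<subseteq> {0..<n} \<Longrightarrow> S \<subseteq> {0..<n} \<Longrightarrow> delta_fwd (dA n a) S xs = S - set xs"
proof (induction xs arbitrary: S)
  case Nil then show ?case by (simp add: delta_fwd_Nil)
next
  case (Cons c xs)
  have "delta_fwd (dA n a) S (c#xs) = delta_fwd (dA n a) (S - {c}) xs"
    using Cons.prems by (simp add: delta_fwd_Cons img_rem)
  also have "\<dots> = S - {c} - set xs" using Cons.IH[of "S - {c}"] Cons.prems by auto
  finally show ?case by auto
qed

lemma bwd_rems: "set xs \<subseteq> {0..<n} \<Longrightarrow> B \<subseteq> {0..<n} \<Longrightarrow> delta_bwd (dA n a) xs B = B - set xs"
proof (induction xs)
  case Nil then show ?case by (simp add: delta_bwd_Nil)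
next
  case (Cons c xs)
  have "delta_bwd (dA n a) (c#xs) B = {r. \<exists>q\<in>B - set xs. (r, c, q) \<in> dA n a}"
    using Cons by (simp add: delta_bwd_Cons)
  also have "\<dots> = B - set xs - {c}" using Cons.prems by (intro pre_rem) auto
  finally show ?case by auto
qed

lemma first_h:
  "qs \<in> runs (dA n a) w \<Longrightarrow> hd qs < a \<Longrightarrow> a \<le> last qs \<Longrightarrow> hd (dropWhile (\<lambda>c. c < n) w) = n + hd qs"
proof (induction w arbitrary: qs)
  case Nil then show ?case by (auto simp: runs_Nil)
next
  case (Cons c w)
  then obtain q qs' where qs: "qs = q # qs'" "qs' \<in> runs (dA n a) w" "(q, c, hd qs') \<in> dA n a"
    by (auto simp: runs_Cons)
  have lst: "last qs = last qs'" using qs runs_nonempty by auto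
  show ?case
  proof (cases "c < n")
    case True
    then have "hd qs' = q" using qs(3) unfolding dA_def by auto
    then show ?thesis using Cons.IH[OF qs(2)] Cons.prems qs lst True by auto
  next
    case False
    then have "c = n + q" using qs(3) Cons.prems(2) qs(1) unfolding dA_def by auto
    then show ?thesis using qs False by simp
  qed
qed

lemma ufa_dA: "a < n \<Longrightarrow> is_ufa {0..<n} {0..<n+a} (dA n a) {0..<a} {a..<n}"
proof -
  assume an: "a < n"
  have nfa: "is_nfa {0..<n} {0..<n+a} (dA n a) {0..<a} {a..<n}"
    unfolding is_nfa_def using dA_sub[OF an] an by (intro conjI) auto
  have "r1 = r2" if r1: "r1 \<in> accepting_runs (dA n a) {0..<a} {a..<n} w"
     and r2: "r2 \<in> accepting_runs (dA n a) {0..<a} {a..<n} w" for w r1 r2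
  proof -
    have a1: "r1 \<in> runs (dA n a) w" "hd r1 < a" "a \<le> last r1" using r1 unfolding accepting_runs_def by auto
    have a2: "r2 \<in> runs (dA n a) w" "hd r2 < a" "a \<le> last r2" using r2 unfolding accepting_runs_def by auto
    have "hd (dropWhile (\<lambda>c. c < n) w) = n + hd r1" by (rule first_h[OF a1])
    moreover have "hd (dropWhile (\<lambda>c. c < n) w) = n + hd r2" by (rule first_h[OF a2])
    ultimately have "hd r1 = hd r2" by simp
    then show "r1 = r2"
      apply (rule det_runs[of "dA n a", rotated 3])
        apply (erule (1) dA_det)
       apply (rule a1(1))
      apply (rule a2(1))
      done
  qed
  then show ?thesis unfolding is_ufa_def using nfa by (intro conjI ballI)
qed


lemma discrete_cross:
  assumes "P m" "\<not> P N" "m \<le> N"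
  shows "\<exists>b. m \<le> b \<and> b < N \<and> P b \<and> \<not> P (Suc b)"
  using assms
proof (induction N)
  case 0 then show ?case by auto
next
  case (Suc N)
  show ?case
  proof (cases "P N")
    case True
    have "m \<noteq> Suc N" using Suc.prems by auto
    then have "m \<le> N" using Suc.prems by auto
    then show ?thesis using Suc.prems True by (intro exI[of _ N]) auto
  next
    case False
    then have "m \<le> N" using Suc.prems by (cases "m = Suc N") auto
    then show ?thesis using Suc.IH[OF Suc.prems(1) False] by auto
  qed
qed

lemma arith_choice:
  fixes n :: nat
  assumes n2: "2 \<le> n"
  shows "\<exists>b. 1 \<le> b \<and> b < n \<and> (n+1)*2^n \<le> 4*(2^(n-b))^2 \<and> (n+1)*2^n \<le> 4*((n-b+1)*2^b)^2"
proof -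
  define P where "P b = ((n+1)*2^n \<le> 4*(2^(n-b))^2)" for b
  have "n + 1 \<le> 2^n" using less_exp[of n] by (simp add: Suc_le_eq)
  then have "(n+1)*2^n \<le> 2^n*2^n" by (rule mult_le_mono1)
  also have "\<dots> = 4 * (2^(n-1))^2"
  proof -
    have "(2::nat)^n = 2 * 2^(n-1)" using n2 by (metis One_nat_def Suc_pred le_zero_eq not_gr0 not_one_le_zero power_Suc zero_neq_numeral one_le_numeral le_trans)
    then show ?thesis by (simp add: power2_eq_square)
  qed
  finally have P1: "P 1" unfolding P_def .
  have "4 * (2::nat)^0 < 3 * 2^2" by simp
  also have "\<dots> \<le> (n+1) * 2^n" using n2 by (intro mult_le_mono power_increasing) auto
  finally have Pn: "\<not> P n" unfolding P_def by simp
  obtain b where b: "1 \<le> b" "b < n" "P b" "\<not> P (Suc b)"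
    using discrete_cross[of P 1 n, OF P1 Pn] n2 by auto
  define a where "a = n - b"
  have a1: "1 \<le> a" and nab: "n = a + b" using b unfolding a_def by auto
  define A :: nat where "A = 2^a"
  define B :: nat where "B = 2^b"
  have Apos: "A > 0" "B > 0" unfolding A_def B_def by auto
  have pn: "(2::nat)^n = A * B" unfolding A_def B_def nab by (simp add: power_add)
  have e: "(2::nat)^(n-b) = A" by (simp add: A_def a_def)
  have H1: "((n+1)*B)*A \<le> (4*A)*A" using b(3) unfolding P_def pn e power2_eq_square
    by (simp only: ac_simps)
  have sa: "n - Suc b = a - 1" unfolding a_def by simp
  have e2: "4 * ((2::nat)^(a-1))^2 = A * A"
  proof -
    have "(2::nat)^a = 2 * 2^(a-1)" using a1 by (metis Suc_diff_le diff_Suc_1 power_Suc)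
    then show ?thesis unfolding A_def by (simp add: power2_eq_square)
  qed
  have H2: "A*A < ((n+1)*B)*A" using b(4) unfolding P_def sa pn e2
    by (simp only: ac_simps not_le)
  have H1': "(n+1)*B \<le> 4*A" using H1 Apos by simp
  have H2': "A < (n+1)*B" using H2 Apos by simp
  have "b \<le> a + 1"
  proof (rule ccontr)
    assume "\<not> b \<le> a + 1"
    then have "2^(a+2) \<le> (2::nat)^b" by (intro power_increasing) auto
    then have "4 * A \<le> B" unfolding A_def B_def by (simp add: power_add)
    then have "(n+1)*(4*A) \<le> (n+1)*B" by (rule mult_le_mono2)
    then have "(n+1)*(4*A) \<le> 4*A" using order_trans[OF _ H1'] by blast
    then show False using Apos n2 by simp
  qed
  then have na: "n + 1 \<le> 2*(a+1)" using nab by simp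
  have G1: "(n+1)*2^n \<le> 4*(2^(n-b))^2"
    using b(3) unfolding P_def .
  have "(n+1)*2^n = (n+1)*B*A" unfolding pn by (simp add: algebra_simps)
  also have "\<dots> \<le> (n+1)*B*((n+1)*B)" using H2' by (intro mult_le_mono) auto
  also have "\<dots> \<le> (2*(a+1))*B*((2*(a+1))*B)" using na by (intro mult_le_mono) auto
  also have "\<dots> = 4*((a+1)*B)^2" by (simp add: power2_eq_square algebra_simps)
  finally have G2: "(n+1)*2^n \<le> 4*((n-b+1)*2^b)^2" unfolding a_def B_def .
  show ?thesis using b G1 G2 by blast
qed


lemma fwd_card:
  assumes an: "a < n"
  shows "2^a \<le> card (fwd_det_states {0..<n+a} (dA n a) {0..<a})"
proof -
  have sub: "Pow {0..<a} \<subseteq> fwd_det_states {0..<n+a} (dA n a) {0..<a}"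
  proof
    fix S assume S: "S \<in> Pow {0..<a}"
    define L where "L = sorted_list_of_set ({0..<a} - S)"
    have sL: "set L = {0..<a} - S" unfolding L_def by simp
    have "delta_fwd (dA n a) {0..<a} L = {0..<a} - set L"
      using an sL by (intro fwd_rems) auto
    also have "\<dots> = S" using S sL by auto
    finally have "delta_fwd (dA n a) {0..<a} L = S" .
    moreover have "L \<in> lists {0..<n+a}" using sL by auto
    ultimately show "S \<in> fwd_det_states {0..<n+a} (dA n a) {0..<a}"
      unfolding fwd_det_states_def by blast
  qed
  have fin: "fwd_det_states {0..<n+a} (dA n a) {0..<a} \<subseteq> Pow {0..<n}"
    unfolding fwd_det_states_def using delta_fwd_sub[of "dA n a" "{0..<n}" "{0..<a}"] dA_sub[OF an] an
    by fastforce
  have "card (Pow {0..<a}) \<le> card (fwd_det_states {0..<n+a} (dA n a) {0..<a})"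
    by (rule card_mono[OF finite_subset[OF fin] sub]) simp
  then show ?thesis by (simp add: card_Pow)
qed

lemma bwd_card:
  assumes an: "a < n"
  shows "(a+1)*2^(n-a) \<le> card (bwd_det_states {0..<n+a} (dA n a) {a..<n})"
proof -
  define g where "g = (\<lambda>(x::nat, T::nat set). if x < a then insert x T else T)"
  let ?D = "{0..a} \<times> Pow {a..<n}"
  have sub: "g ` ?D \<subseteq> bwd_det_states {0..<n+a} (dA n a) {a..<n}"
  proof
    fix P assume "P \<in> g ` ?D"
    then obtain x T where xT: "x \<le> a" "T \<subseteq> {a..<n}" "P = g (x, T)" by auto
    define L where "L = sorted_list_of_set ({a..<n} - T)"
    have sL: "set L = {a..<n} - T" unfolding L_def by simp
    have Ll: "L \<in> lists {0..<n+a}" using sL by auto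
    show "P \<in> bwd_det_states {0..<n+a} (dA n a) {a..<n}"
    proof (cases "x < a")
      case True
      have "delta_bwd (dA n a) [n+x] {a..<n} = insert x {a..<n}"
        using pre_h[OF True an] by (simp add: delta_bwd_Cons delta_bwd_Nil)
      then have "delta_bwd (dA n a) (L @ [n+x]) {a..<n} = delta_bwd (dA n a) L (insert x {a..<n})"
        by (simp add: delta_bwd_append)
      also have "\<dots> = insert x {a..<n} - set L" using sL True an by (intro bwd_rems) auto
      also have "\<dots> = P" using xT True sL unfolding g_def by auto
      finally show ?thesis unfolding bwd_det_states_def using Ll True an by fastforce
    next
      case False
      have "delta_bwd (dA n a) L {a..<n} = {a..<n} - set L" using sL an by (intro bwd_rems) auto
      also have "\<dots> = P" using xT False sL unfolding g_def by auto
      finally show ?thesis unfolding bwd_det_states_def using Ll by blast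
    qed
  qed
  have inj: "inj_on g ?D"
  proof (rule inj_onI)
    fix p1 p2 assume p1: "p1 \<in> ?D" and p2: "p2 \<in> ?D" and eq: "g p1 = g p2"
    obtain x1 T1 x2 T2 where pp: "p1 = (x1, T1)" "p2 = (x2, T2)" by fastforce
    have r1: "x1 \<le> a" "T1 \<subseteq> {a..<n}" "x2 \<le> a" "T2 \<subseteq> {a..<n}" using p1 p2 pp by auto
    have c1: "g p1 \<inter> {a..<n} = T1" "g p2 \<inter> {a..<n} = T2" using r1 pp unfolding g_def by auto
    have c2: "{z \<in> g p1. z < a} = (if x1 < a then {x1} else {})"
             "{z \<in> g p2. z < a} = (if x2 < a then {x2} else {})" using r1 pp unfolding g_def by auto
    have "T1 = T2" using c1 eq by simp
    moreover have "x1 = x2"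
    proof -
      have "(if x1 < a then {x1} else {}) = (if x2 < a then {x2} else {})" using c2 eq by simp
      then show ?thesis using r1 by (auto split: if_splits)
    qed
    ultimately show "p1 = p2" using pp by simp
  qed
  have fin: "bwd_det_states {0..<n+a} (dA n a) {a..<n} \<subseteq> Pow {0..<n}"
    unfolding bwd_det_states_def using delta_bwd_sub[of "dA n a" "{0..<n}" "{a..<n}"] dA_sub[OF an]
    by fastforce
  have "card (g ` ?D) \<le> card (bwd_det_states {0..<n+a} (dA n a) {a..<n})"
    by (rule card_mono[OF finite_subset[OF fin] sub]) simp
  moreover have "card (g ` ?D) = (a+1)*2^(n-a)"
    using card_image[OF inj] by (simp add: card_cartesian_product card_Pow)
  ultimately show ?thesis by simp
qed

theorem proposition3:
  fixes n :: nat
  shows "\<exists>(Q :: nat set) (Sig :: nat set) d I F.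
           is_ufa Q Sig d I F \<and> card Q = n \<and>
           real (card (fwd_det_states Sig d I)) \<ge> 1/2 * sqrt (real n + 1) * 2 powr (real n / 2) \<and>
           real (card (bwd_det_states Sig d F)) \<ge> 1/2 * sqrt (real n + 1) * 2 powr (real n / 2)"
proof (cases "n \<le> 1")
  case True
  define d :: "(nat \<times> nat \<times> nat) set" where "d = {}"
  have ufa: "is_ufa {0..<n} {} d {} {}"
    unfolding is_ufa_def is_nfa_def accepting_runs_def d_def by auto
  have f: "fwd_det_states {} d {} = {{}}"
    unfolding fwd_det_states_def delta_fwd_def by auto
  have b: "bwd_det_states {} d {} = {{}}"
    unfolding bwd_det_states_def delta_bwd_def by auto
  have bnd: "1/2 * sqrt (real n + 1) * 2 powr (real n / 2) \<le> real (1::nat)"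
  proof (rule bound_lemma)
    show "(n+1)*2^n \<le> 4*1^2" using True by (cases n) auto
  qed
  show ?thesis
    apply (rule exI[of _ "{0..<n}"], rule exI[of _ "{}"], rule exI[of _ d], rule exI[of _ "{}"], rule exI[of _ "{}"])
    using ufa f b bnd by simp
next
  case False
  then obtain b where b: "1 \<le> b" "b < n" "(n+1)*2^n \<le> 4*(2^(n-b))^2" "(n+1)*2^n \<le> 4*((n-b+1)*2^b)^2"
    using arith_choice[of n] by auto
  define a where "a = n - b"
  have an: "a < n" "n - a = b" using b unfolding a_def by auto
  have c1: "(n+1)*2^n \<le> 4 * (card (fwd_det_states {0..<n+a} (dA n a) {0..<a}))^2"
    using b(3) fwd_card[OF an(1)] unfolding a_def[symmetric]
    by (meson le_trans mult_le_mono2 power_mono zero_le)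
  have c2: "(n+1)*2^n \<le> 4 * (card (bwd_det_states {0..<n+a} (dA n a) {a..<n}))^2"
    using b(4) bwd_card[OF an(1)] unfolding a_def[symmetric] an(2)
    by (meson le_trans mult_le_mono2 power_mono zero_le)
  show ?thesis
    apply (rule exI[of _ "{0..<n}"], rule exI[of _ "{0..<n+a}"], rule exI[of _ "dA n a"],
        rule exI[of _ "{0..<a}"], rule exI[of _ "{a..<n}"])
    using ufa_dA[OF an(1)] bound_lemma[OF c1] bound_lemma[OF c2] by simp
qed

end
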